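(* Let $R$ be a unital, non-associative ring, let $\sigma,\delta\colon R\to R$ be left $R$-additive maps, and consider the non-associative Ore extension $R[X;\sigma,\delta]$. Let $\alpha$ be a ring endomorphism of $R$ such that there exists $a\in R$ with $\alpha(a)=1$. Then the homogeneous extension of $\alpha$ to $R[X;\sigma,\delta]$ is a ring endomorphism if and only if $\alpha\circ\delta=\delta\circ\alpha$ and $\alpha\circ\sigma=\sigma\circ\alpha$.
   Context: "Non-associative" means not necessarily associative. $\mathbb{N}$ denotes the non-negative integers. A map $\beta\colon R\to R$ is left $R$-additive if $r\cdot\beta(s+t)=r\cdot(\beta(s)+\beta(t))$ for all $r,s,t\in R$. For $m\in\mathbb{N}$ and $0\le i\le m$, $\pi_i^m\colon R\to R$ denotes the sum of all $\binom{m}{i}$ compositions of $i$ copies of $\sigma$ and $m-i$ copies of $\delta$ in arbitrary order ($\pi_0^0=\mathrm{id}_R$), and $\pi_i^m:=0$ if $i<0$ or $i>m$. The non-associative Ore extension $R[X;\sigma,\delta]$ is the set of formal sums $\sum_{i\in\mathbb{N}}a_iX^i$ with $a_i\in R$, finitely many nonzero, with coefficientwise addition and the distributive multiplication determined by $aX^m\cdot bX^n=\sum_{i\in\mathbb{N}}(a\cdot\pi_i^m(b))X^{i+n}$. An additive map $\gamma\colon R\to R$ is extended homogeneously by $\gamma\left(\sum_i a_iX^i\right):=\sum_i\gamma(a_i)X^i$. *)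

theory Defs
  imports Main
begin

definition nonassoc_ring_1 :: "('a::{ab_group_add,times,one}) itself \<Rightarrow> bool" where
  "nonassoc_ring_1 _ \<longleftrightarrow>
     (\<forall>a b c :: 'a. (a + b) * c = a * c + b * c) \<and>
     (\<forall>a b c :: 'a. a * (b + c) = a * b + a * c) \<and>
     (\<forall>a :: 'a. 1 * a = a \<and> a * 1 = a)"

definition left_R_additive :: "('a::{plus,times} \<Rightarrow> 'a) \<Rightarrow> bool" where
  "left_R_additive \<beta> \<longleftrightarrow> (\<forall>r s t. r * \<beta> (s + t) = r * (\<beta> s + \<beta> t))"

definition ring_endo :: "('a::{plus,times} \<Rightarrow> 'a) \<Rightarrow> bool" where
  "ring_endo f \<longleftrightarrow> (\<forall>x y. f (x + y) = f x + f y) \<and> (\<forall>x y. f (x * y) = f x * f y)"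

text \<open>pi i m: sum of all compositions of i copies of sigma and m-i copies of delta,
  encoded as words over bool (True = sigma, False = delta); zero if i > m.\<close>
definition ore_pi :: "('a \<Rightarrow> 'a) \<Rightarrow> ('a \<Rightarrow> 'a) \<Rightarrow> nat \<Rightarrow> nat \<Rightarrow> 'a \<Rightarrow> ('a::comm_monoid_add)" where
  "ore_pi \<sigma> \<delta> i m x =
     (\<Sum>w\<in>{w. length w = m \<and> length (filter id w) = i}.
        foldr (\<lambda>b f. (if b then \<sigma> else \<delta>) \<circ> f) w id x)"

text \<open>Elements of R[X; sigma, delta]: finitely supported coefficient sequences.\<close>
definition ore_carrier :: "(nat \<Rightarrow> 'a::zero) set" where
  "ore_carrier = {p. finite {n. p n \<noteq> 0}}"

definition ore_add :: "(nat \<Rightarrow> 'a::plus) \<Rightarrow> (nat \<Rightarrow> 'a) \<Rightarrow> nat \<Rightarrow> 'a" where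
  "ore_add p q = (\<lambda>k. p k + q k)"

definition ore_mult :: "('a \<Rightarrow> 'a) \<Rightarrow> ('a \<Rightarrow> 'a) \<Rightarrow> (nat \<Rightarrow> 'a::{comm_monoid_add,times})
    \<Rightarrow> (nat \<Rightarrow> 'a) \<Rightarrow> nat \<Rightarrow> 'a" where
  "ore_mult \<sigma> \<delta> p q = (\<lambda>k. \<Sum>m\<in>{m. p m \<noteq> 0}. \<Sum>n\<in>{n. q n \<noteq> 0}.
      \<Sum>i\<in>{..m}. if i + n = k then p m * ore_pi \<sigma> \<delta> i m (q n) else 0)"

definition hom_ext :: "('a \<Rightarrow> 'a) \<Rightarrow> (nat \<Rightarrow> 'a) \<Rightarrow> nat \<Rightarrow> 'a" where
  "hom_ext \<gamma> p = (\<lambda>k. \<gamma> (p k))"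

definition ore_ring_endo :: "('a \<Rightarrow> 'a) \<Rightarrow> ('a \<Rightarrow> 'a) \<Rightarrow>
    ((nat \<Rightarrow> 'a::{comm_monoid_add,times}) \<Rightarrow> (nat \<Rightarrow> 'a)) \<Rightarrow> bool" where
  "ore_ring_endo \<sigma> \<delta> F \<longleftrightarrow>
     (\<forall>p\<in>ore_carrier. F p \<in> ore_carrier) \<and>
     (\<forall>p\<in>ore_carrier. \<forall>q\<in>ore_carrier. F (ore_add p q) = ore_add (F p) (F q)) \<and>
     (\<forall>p\<in>ore_carrier. \<forall>q\<in>ore_carrier. F (ore_mult \<sigma> \<delta> p q) = ore_mult \<sigma> \<delta> (F p) (F q))"

end

theory Submission
  imports Defs
begin

lemma add_hom_zero:
  fixes g :: "'a::ab_group_add \<Rightarrow> 'b::ab_group_add"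
  assumes "\<forall>x y. g (x + y) = g x + g y"
  shows "g 0 = 0"
  using assms by (metis add.right_neutral add_left_cancel)

lemma sum_hom:
  fixes g :: "'a::ab_group_add \<Rightarrow> 'b::ab_group_add"
  assumes "\<forall>x y. g (x + y) = g x + g y"
  shows "g (sum f A) = sum (\<lambda>x. g (f x)) A"
proof (cases "finite A")
  case True
  then show ?thesis
    by (induction A rule: finite_induct) (auto simp: add_hom_zero[OF assms] assms)
qed (simp add: add_hom_zero[OF assms])

definition monom :: "'a::zero \<Rightarrow> nat \<Rightarrow> nat \<Rightarrow> 'a" where
  "monom c m = (\<lambda>k. if k = m then c else 0)"

lemma monom_apply: "monom c m k = (if k = m then c else 0)"
  by (simp add: monom_def)

lemma foldr_zero:
  fixes \<sigma> \<delta> :: "'a::ab_group_add \<Rightarrow> 'a"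
  assumes "\<sigma> 0 = 0" "\<delta> 0 = 0"
  shows "foldr (\<lambda>b f. (if b then \<sigma> else \<delta>) \<circ> f) w id 0 = 0"
  using assms by (induction w) auto

lemma pi_zero:
  fixes \<sigma> \<delta> :: "'a::ab_group_add \<Rightarrow> 'a"
  assumes "\<sigma> 0 = 0" "\<delta> 0 = 0"
  shows "ore_pi \<sigma> \<delta> i m 0 = 0"
  unfolding ore_pi_def using foldr_zero[of \<sigma> \<delta>] assms by simp

lemma foldr_comm:
  assumes "\<And>y. \<alpha> (\<sigma> y) = \<sigma> (\<alpha> y)" "\<And>y. \<alpha> (\<delta> y) = \<delta> (\<alpha> y)"
  shows "\<alpha> (foldr (\<lambda>b f. (if b then \<sigma> else \<delta>) \<circ> f) w id x)
       = foldr (\<lambda>b f. (if b then \<sigma> else \<delta>) \<circ> f) w id (\<alpha> x)"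
  using assms by (induction w) auto

lemma pi_01: "{w. length w = Suc 0 \<and> length (filter id w) = 0} = {[False]}"
  by (auto simp: length_Suc_conv)

lemma pi_11: "{w. length w = Suc 0 \<and> length (filter id w) = Suc 0} = {[True]}"
  by (auto simp: length_Suc_conv split: if_splits)

lemma monomult_gen:
  fixes \<sigma> \<delta> :: "'a::{ab_group_add,times} \<Rightarrow> 'a"
  assumes m0l: "\<And>x::'a. 0 * x = 0" and m0r: "\<And>x::'a. x * 0 = 0"
    and pi0: "\<And>i m. ore_pi \<sigma> \<delta> i m 0 = 0"
  shows "ore_mult \<sigma> \<delta> (monom c m) (monom d n) k
      = (\<Sum>i\<in>{..m}. if i + n = k then c * ore_pi \<sigma> \<delta> i m d else 0)"
proof (cases "c = 0 \<or> d = 0")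
  case True
  have L: "ore_mult \<sigma> \<delta> (monom c m) (monom d n) k = 0"
    using True unfolding ore_mult_def monom_def by auto
  have "c * ore_pi \<sigma> \<delta> i m d = 0" for i
    using True m0l m0r pi0 by metis
  then have "(\<Sum>i\<in>{..m}. if i + n = k then c * ore_pi \<sigma> \<delta> i m d else 0) = 0"
    by (intro sum.neutral) simp
  then show ?thesis using L by simp
next
  case False
  then have S: "{ma. monom c m ma \<noteq> 0} = {m}" "{na. monom d n na \<noteq> 0} = {n}"
    unfolding monom_def by auto
  show ?thesis unfolding ore_mult_def S by (simp add: monom_def cong: if_cong)
qed

theorem mainTheorem2:
  fixes \<sigma> \<delta> \<alpha> :: "'a::{ab_group_add,times,one} \<Rightarrow> 'a"
  assumes "nonassoc_ring_1 TYPE('a)"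
    and "left_R_additive \<sigma>" and "left_R_additive \<delta>"
    and "ring_endo \<alpha>"
    and "\<exists>a. \<alpha> a = 1"
  shows "ore_ring_endo \<sigma> \<delta> (hom_ext \<alpha>) \<longleftrightarrow> (\<alpha> \<circ> \<delta> = \<delta> \<circ> \<alpha> \<and> \<alpha> \<circ> \<sigma> = \<sigma> \<circ> \<alpha>)"
proof -
  have dr: "\<And>a b c :: 'a. (a + b) * c = a * c + b * c"
   and dl: "\<And>a b c :: 'a. a * (b + c) = a * b + a * c"
   and one: "\<And>a :: 'a. 1 * a = a \<and> a * 1 = a"
    using assms(1) unfolding nonassoc_ring_1_def by auto
  have m0l: "\<And>x::'a. 0 * x = 0"
    using add_hom_zero[of "\<lambda>y. y * x" for x] dr by blast
  have m0r: "\<And>x::'a. x * 0 = 0"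
    using add_hom_zero[of "\<lambda>y. x * y" for x] dl by blast
  have sadd: "\<forall>x y. \<sigma> (x + y) = \<sigma> x + \<sigma> y"
    using assms(2) one unfolding left_R_additive_def by metis
  have dadd: "\<forall>x y. \<delta> (x + y) = \<delta> x + \<delta> y"
    using assms(3) one unfolding left_R_additive_def by metis
  have aadd: "\<forall>x y. \<alpha> (x + y) = \<alpha> x + \<alpha> y" and amul: "\<And>x y. \<alpha> (x * y) = \<alpha> x * \<alpha> y"
    using assms(4) unfolding ring_endo_def by auto
  have s0: "\<sigma> 0 = 0" using add_hom_zero[OF sadd] .
  have d0: "\<delta> 0 = 0" using add_hom_zero[OF dadd] .
  have a0: "\<alpha> 0 = 0" using add_hom_zero[OF aadd] .
  have pi0: "\<And>i m. ore_pi \<sigma> \<delta> i m 0 = 0" using pi_zero[of \<sigma> \<delta>] s0 d0 by blast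
  have monomult: "ore_mult \<sigma> \<delta> (monom c m) (monom d n) k
      = (\<Sum>i\<in>{..m}. if i + n = k then c * ore_pi \<sigma> \<delta> i m d else 0)" for c d :: 'a and m n k
    using monomult_gen[of \<sigma> \<delta>] m0l m0r pi0 by blast
  have hmono: "hom_ext \<alpha> (monom c m) = monom (\<alpha> c) m" for c m
    unfolding hom_ext_def monom_def by (auto simp: a0)
  have monocar: "monom c m \<in> ore_carrier" for c :: 'a and m
  proof -
    have "{n. monom c m n \<noteq> 0} \<subseteq> {m}" unfolding monom_def by auto
    then show ?thesis unfolding ore_carrier_def using finite_subset by blast
  qed
  show ?thesis
  proof
    assume E: "ore_ring_endo \<sigma> \<delta> (hom_ext \<alpha>)"
    then have EM: "\<And>p q. p \<in> ore_carrier \<Longrightarrow> q \<in> ore_carrier \<Longrightarrow>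
        hom_ext \<alpha> (ore_mult \<sigma> \<delta> p q) = ore_mult \<sigma> \<delta> (hom_ext \<alpha> p) (hom_ext \<alpha> q)"
      unfolding ore_ring_endo_def by blast
    obtain a where a: "\<alpha> a = 1" using assms(5) by blast
    have key: "\<alpha> (a * ore_pi \<sigma> \<delta> i 1 b) = ore_pi \<sigma> \<delta> i 1 (\<alpha> b)" if "i \<le> 1" for i b
    proof -
      have "hom_ext \<alpha> (ore_mult \<sigma> \<delta> (monom a 1) (monom b 0)) i
          = ore_mult \<sigma> \<delta> (monom (\<alpha> a) 1) (monom (\<alpha> b) 0) i"
        using EM[OF monocar monocar] hmono by metis
      then have "\<alpha> (\<Sum>j\<in>{..1}. if j + 0 = i then a * ore_pi \<sigma> \<delta> j 1 b else 0)
          = (\<Sum>j\<in>{..1}. if j + 0 = i then 1 * ore_pi \<sigma> \<delta> j 1 (\<alpha> b) else 0)"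
        unfolding monomult hom_ext_def a by simp
      then show ?thesis using that one by (cases i) (auto simp: atMost_Suc)
    qed
    have "\<alpha> (\<delta> b) = \<delta> (\<alpha> b)" for b
      using key[of 0 b] unfolding ore_pi_def using pi_01 by (simp add: amul a one)
    moreover have "\<alpha> (\<sigma> b) = \<sigma> (\<alpha> b)" for b
      using key[of 1 b] unfolding ore_pi_def using pi_11 by (simp add: amul a one)
    ultimately show "\<alpha> \<circ> \<delta> = \<delta> \<circ> \<alpha> \<and> \<alpha> \<circ> \<sigma> = \<sigma> \<circ> \<alpha>" by auto
  next
    assume C: "\<alpha> \<circ> \<delta> = \<delta> \<circ> \<alpha> \<and> \<alpha> \<circ> \<sigma> = \<sigma> \<circ> \<alpha>"
    then have cs: "\<And>y. \<alpha> (\<sigma> y) = \<sigma> (\<alpha> y)" and cd: "\<And>y. \<alpha> (\<delta> y) = \<delta> (\<alpha> y)"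
      by (metis comp_apply)+
    have api: "\<alpha> (ore_pi \<sigma> \<delta> i m x) = ore_pi \<sigma> \<delta> i m (\<alpha> x)" for i m x
      unfolding ore_pi_def sum_hom[OF aadd] foldr_comm[of \<alpha> \<sigma> \<delta>, OF cs cd] ..
    have car: "hom_ext \<alpha> p \<in> ore_carrier" if "p \<in> ore_carrier" for p
    proof -
      have "{n. hom_ext \<alpha> p n \<noteq> 0} \<subseteq> {n. p n \<noteq> 0}" unfolding hom_ext_def using a0 by auto
      then show ?thesis using that unfolding ore_carrier_def using finite_subset by blast
    qed
    have mul: "hom_ext \<alpha> (ore_mult \<sigma> \<delta> p q) = ore_mult \<sigma> \<delta> (hom_ext \<alpha> p) (hom_ext \<alpha> q)"
      if p: "p \<in> ore_carrier" and q: "q \<in> ore_carrier" for p q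
    proof
      fix k
      define T where "T m n = (\<Sum>i\<in>{..m}. if i + n = k then \<alpha> (p m) * ore_pi \<sigma> \<delta> i m (\<alpha> (q n)) else 0)" for m n
      have fp: "finite {m. p m \<noteq> 0}" and fq: "finite {n. q n \<noteq> 0}"
        using p q unfolding ore_carrier_def by auto
      have "hom_ext \<alpha> (ore_mult \<sigma> \<delta> p q) k = (\<Sum>m\<in>{m. p m \<noteq> 0}. \<Sum>n\<in>{n. q n \<noteq> 0}. T m n)"
        unfolding hom_ext_def ore_mult_def T_def sum_hom[OF aadd]
        by (intro sum.cong refl) (auto simp: a0 amul api)
      also have "\<dots> = (\<Sum>m\<in>{m. p m \<noteq> 0}. \<Sum>n\<in>{n. \<alpha> (q n) \<noteq> 0}. T m n)"
      proof -
        have "(\<Sum>n\<in>{n. q n \<noteq> 0}. T m n) = (\<Sum>n\<in>{n. \<alpha> (q n) \<noteq> 0}. T m n)" for m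
          by (rule sum.mono_neutral_right[OF fq]) (auto simp: T_def pi0 m0r a0 cong: if_cong)
        then show ?thesis by simp
      qed
      also have "\<dots> = (\<Sum>m\<in>{m. \<alpha> (p m) \<noteq> 0}. \<Sum>n\<in>{n. \<alpha> (q n) \<noteq> 0}. T m n)"
      proof (intro sum.mono_neutral_right[OF fp])
        show "{n. \<alpha> (p n) \<noteq> 0} \<subseteq> {n. p n \<noteq> 0}" using a0 by auto
        show "\<forall>i\<in>{n. p n \<noteq> 0} - {n. \<alpha> (p n) \<noteq> 0}. (\<Sum>n\<in>{n. \<alpha> (q n) \<noteq> 0}. T i n) = 0"
          unfolding T_def by (auto simp: m0l cong: if_cong)
      qed
      also have "\<dots> = ore_mult \<sigma> \<delta> (hom_ext \<alpha> p) (hom_ext \<alpha> q) k"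
        unfolding ore_mult_def hom_ext_def T_def ..
      finally show "hom_ext \<alpha> (ore_mult \<sigma> \<delta> p q) k = ore_mult \<sigma> \<delta> (hom_ext \<alpha> p) (hom_ext \<alpha> q) k" .
    qed
    show "ore_ring_endo \<sigma> \<delta> (hom_ext \<alpha>)"
      unfolding ore_ring_endo_def using car mul
      by (auto simp: hom_ext_def ore_add_def aadd)
  qed
qed

end
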